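(* Let $R\subseteq\mathcal{D}^\Sigma$ with $n=|\Sigma|$ and let $k\ge0$ be an integer with $|R|\le|\mathcal{D}|^k$. Then there exist a set $\textup{T}$ of $k$ attributes with $\textup{T}\cap\Sigma=\emptyset$ and $\widehat R\subseteq\mathcal{D}^{\textup{T}\cup\Sigma}$ such that $$R=\pi_\Sigma\Big[\Join_{i\in\Sigma}\pi_{\textup{T}\cup\{i\}}\widehat R\Big],$$ i.e. with $\textup{T}=\{t_1,\dots,t_k\}$ and $R_i=\pi_{\textup{T}\cup\{i\}}\widehat R$, $R(x)\iff\exists t_1\dots\exists t_k\,[\bigwedge_{i\in\Sigma}R_i(t_1,\dots,t_k,x_i)]$. In particular, $R$ is projoin reducible when $k\le n-2$, and projoin reducible to binaries when $k=1$.
   Context: Attributed relation: $R\subseteq\mathcal{D}^\Sigma$, $\Sigma$ a finite set of attributes; $\pi_\Lambda R=\{a|_\Lambda:a\in R\}$. The join of $R_i\subseteq\mathcal{D}^{\Lambda_i}$ is $\{a\in\mathcal{D}^{\cup_i\Lambda_i}: a|_{\Lambda_i}\in R_i\ \forall i\}$. $R\subseteq\mathcal{D}^\Sigma$ is a projoin over a cover $\textup{T}\cup\Sigma=\Lambda_1\cup\dots\cup\Lambda_m$ (with $\textup{T}\cap\Sigma=\emptyset$; elements of $\textup{T}$ are called parameters) if there are $R^{\Lambda_i}\subseteq\mathcal{D}^{\Lambda_i}$ with $R=\pi_\Sigma[R^{\Lambda_1}\Join\dots\Join R^{\Lambda_m}]$; it is projoin reducible if this holds with $0<|\Lambda_i|<|\Sigma|$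 for all $i$, and projoin reducible to binaries if moreover all $|\Lambda_i|=2$. *)

theory Defs
  imports "HOL-Library.FuncSet" "HOL-Library.Equipollence"
begin

text \<open>Tuples over a set of attributes \<open>\<Lambda>\<close> with values in the domain \<open>D\<close> are
  extensional functions, i.e. elements of \<open>\<Lambda> \<rightarrow>\<^sub>E D\<close> (= D^\<Lambda>).
  An attributed relation on \<open>\<Lambda>\<close> is a subset of \<open>\<Lambda> \<rightarrow>\<^sub>E D\<close>.\<close>

definition proj :: "'a set \<Rightarrow> ('a \<Rightarrow> 'd) set \<Rightarrow> ('a \<Rightarrow> 'd) set" where
  "proj \<Lambda> R = (\<lambda>a. restrict a \<Lambda>) ` R"

definition join :: "'d set \<Rightarrow> 'i set \<Rightarrow> ('i \<Rightarrow> 'a set) \<Rightarrow> ('i \<Rightarrow> ('a \<Rightarrow> 'd) set) \<Rightarrow> ('a \<Rightarrow> 'd) set" where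
  "join D I \<Lambda> S = {a \<in> (\<Union>i\<in>I. \<Lambda> i) \<rightarrow>\<^sub>E D. \<forall>i\<in>I. restrict a (\<Lambda> i) \<in> S i}"

definition projoin_over :: "'d set \<Rightarrow> 'a set \<Rightarrow> ('a \<Rightarrow> 'd) set \<Rightarrow> 'a set \<Rightarrow> nat \<Rightarrow> (nat \<Rightarrow> 'a set) \<Rightarrow> bool" where
  "projoin_over D \<Sigma> R T m \<Lambda> \<longleftrightarrow>
     finite T \<and> T \<inter> \<Sigma> = {} \<and> (\<Union>i<m. \<Lambda> i) = T \<union> \<Sigma> \<and>
     (\<exists>S. (\<forall>i<m. S i \<subseteq> \<Lambda> i \<rightarrow>\<^sub>E D) \<and> R = proj \<Sigma> (join D {..<m} \<Lambda> S))"

definition projoin_reducible :: "'d set \<Rightarrow> 'a set \<Rightarrow> ('a \<Rightarrow> 'd) set \<Rightarrow> bool" where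
  "projoin_reducible D \<Sigma> R \<longleftrightarrow>
     (\<exists>T m \<Lambda>. projoin_over D \<Sigma> R T m \<Lambda> \<and>
        (\<forall>i<m. 0 < card (\<Lambda> i) \<and> card (\<Lambda> i) < card \<Sigma>))"

definition projoin_reducible_to_binaries :: "'d set \<Rightarrow> 'a set \<Rightarrow> ('a \<Rightarrow> 'd) set \<Rightarrow> bool" where
  "projoin_reducible_to_binaries D \<Sigma> R \<longleftrightarrow>
     (\<exists>T m \<Lambda>. projoin_over D \<Sigma> R T m \<Lambda> \<and>
        (\<forall>i<m. 0 < card (\<Lambda> i) \<and> card (\<Lambda> i) < card \<Sigma> \<and> card (\<Lambda> i) = 2))"

end

theory Submission
  imports Defs
begin

lemma join_reindex:
  assumes "bij_betw e I J"
  shows "join D I (\<lambda>j. L (e j)) (\<lambda>j. S (e j)) = join D J L S"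
proof -
  have J: "J = e ` I" using assms by (simp add: bij_betw_def)
  show ?thesis unfolding join_def J by auto
qed

lemma part1:
  fixes D :: "'d set" and \<Sigma> :: "'a set" and R :: "('a \<Rightarrow> 'd) set" and k :: nat
  assumes attrs: "infinite (UNIV :: 'a set)"
    and fin: "finite \<Sigma>" and ne: "\<Sigma> \<noteq> {}"
    and rel: "R \<subseteq> \<Sigma> \<rightarrow>\<^sub>E D"
    and size: "R \<lesssim> ({..<k} \<rightarrow>\<^sub>E D)"
  shows "\<exists>T Rh. finite T \<and> card T = k \<and> T \<inter> \<Sigma> = {} \<and> Rh \<subseteq> (T \<union> \<Sigma>) \<rightarrow>\<^sub>E D \<and>
            R = proj \<Sigma> (join D \<Sigma> (\<lambda>i. T \<union> {i}) (\<lambda>i. proj (T \<union> {i}) Rh))"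
proof -
  obtain f where finj: "inj_on f R" and fR: "f ` R \<subseteq> {..<k} \<rightarrow>\<^sub>E D"
    using size unfolding lepoll_def by blast
  have "infinite (UNIV - \<Sigma>)" using attrs fin by auto
  then obtain T where T: "finite T" "card T = k" "T \<subseteq> UNIV - \<Sigma>"
    using infinite_arbitrarily_large by blast
  then have disj: "T \<inter> \<Sigma> = {}" by auto
  obtain g where g: "bij_betw g T {0..<card T}"
    using ex_bij_betw_finite_nat[OF T(1)] by blast
  have gT: "g ` T = {..<k}" using g T(2) by (auto simp: bij_betw_def)
  define ext where "ext a = (\<lambda>x. if x \<in> \<Sigma> then a x else if x \<in> T then f a (g x) else undefined)" for a
  define Rh where "Rh = ext ` R"
  have extT: "x \<in> T \<Longrightarrow> ext a x = f a (g x)" for a x using disj unfolding ext_def by auto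
  have extS: "a \<in> R \<Longrightarrow> restrict (ext a) \<Sigma> = a" for a
  proof -
    assume a: "a \<in> R"
    then have aE: "a \<in> \<Sigma> \<rightarrow>\<^sub>E D" using rel by auto
    show ?thesis
    proof
      fix x show "restrict (ext a) \<Sigma> x = a x"
        using PiE_arb[OF aE, of x] unfolding ext_def by auto
    qed
  qed
  have agree: "a = a'" if "a \<in> R" "a' \<in> R" "\<forall>x\<in>T. ext a x = ext a' x" for a a'
  proof -
    have "f a j = f a' j" for j
    proof (cases "j < k")
      case True
      then have "j \<in> g ` T" using gT by simp
      then obtain x where "x \<in> T" "j = g x" by blast
      then show ?thesis using that extT by metis
    next
      case False
      have "f a \<in> {..<k} \<rightarrow>\<^sub>E D" "f a' \<in> {..<k} \<rightarrow>\<^sub>E D" using fR that(1,2) by auto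
      then show ?thesis using False PiE_arb[of "f a" "{..<k}" "\<lambda>_. D" j] PiE_arb[of "f a'" "{..<k}" "\<lambda>_. D" j] by simp
    qed
    then have "f a = f a'" by auto
    then show ?thesis using finj that inj_on_def by metis
  qed
  have Rh_sub: "Rh \<subseteq> (T \<union> \<Sigma>) \<rightarrow>\<^sub>E D"
  proof
    fix b assume "b \<in> Rh"
    then obtain a where a: "a \<in> R" "b = ext a" unfolding Rh_def by auto
    have "a \<in> \<Sigma> \<rightarrow>\<^sub>E D" "f a \<in> {..<k} \<rightarrow>\<^sub>E D" using a rel fR by auto
    moreover have "x \<in> T \<Longrightarrow> g x < k" for x using gT by auto
    ultimately show "b \<in> (T \<union> \<Sigma>) \<rightarrow>\<^sub>E D" unfolding a(2) ext_def
      by (intro PiE_I) (auto intro: PiE_mem)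
  qed
  have U: "(\<Union>i\<in>\<Sigma>. T \<union> {i}) = T \<union> \<Sigma>" using ne by auto
  define J where "J = join D \<Sigma> (\<lambda>i. T \<union> {i}) (\<lambda>i. proj (T \<union> {i}) Rh)"
  have "R = proj \<Sigma> J"
  proof
    show "R \<subseteq> proj \<Sigma> J"
    proof
      fix a assume a: "a \<in> R"
      have "ext a \<in> Rh" using a Rh_def by auto
      then have "ext a \<in> J" unfolding J_def join_def U proj_def using Rh_sub by auto
      then show "a \<in> proj \<Sigma> J" unfolding proj_def using extS[OF a] by (metis image_eqI)
    qed
  next
    show "proj \<Sigma> J \<subseteq> R"
    proof
      fix c assume "c \<in> proj \<Sigma> J"
      then obtain b where b: "b \<in> J" "c = restrict b \<Sigma>" unfolding proj_def by auto
      have bi: "\<forall>i\<in>\<Sigma>. \<exists>a\<in>R. restrict b (T \<union> {i}) = restrict (ext a) (T \<union> {i})"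
        using b(1) unfolding J_def join_def proj_def Rh_def by auto
      then obtain A where A: "\<And>i. i \<in> \<Sigma> \<Longrightarrow> A i \<in> R \<and> restrict b (T \<union> {i}) = restrict (ext (A i)) (T \<union> {i})"
        by metis
      obtain i0 where i0: "i0 \<in> \<Sigma>" using ne by auto
      have bx: "i \<in> \<Sigma> \<Longrightarrow> x \<in> T \<union> {i} \<Longrightarrow> b x = ext (A i) x" for i x
        using A[of i] by (metis restrict_apply')
      have Aeq: "i \<in> \<Sigma> \<Longrightarrow> A i = A i0" for i
        using agree[of "A i" "A i0"] A i0 bx by (metis UnI1)
      have "restrict b \<Sigma> = A i0"
      proof
        fix x show "restrict b \<Sigma> x = A i0 x"
        proof (cases "x \<in> \<Sigma>")
          case True
          then have "b x = ext (A x) x" using bx by auto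
          also have "\<dots> = A x x" using True unfolding ext_def by auto
          finally show ?thesis using Aeq True by auto
        next
          case False
          have "A i0 \<in> \<Sigma> \<rightarrow>\<^sub>E D" using A i0 rel by auto
          then show ?thesis using False by (auto simp: PiE_def extensional_def)
        qed
      qed
      then show "c \<in> R" using b A i0 by auto
    qed
  qed
  then show ?thesis using T disj Rh_sub unfolding J_def by blast
qed

lemma part23:
  fixes D :: "'d set" and \<Sigma> :: "'a set" and R :: "('a \<Rightarrow> 'd) set"
  assumes fin: "finite \<Sigma>" and ne: "\<Sigma> \<noteq> {}"
    and T: "finite T" "T \<inter> \<Sigma> = {}" and Rh: "Rh \<subseteq> (T \<union> \<Sigma>) \<rightarrow>\<^sub>E D"
    and eq: "R = proj \<Sigma> (join D \<Sigma> (\<lambda>i. T \<union> {i}) (\<lambda>i. proj (T \<union> {i}) Rh))"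
  shows "\<exists>m \<Lambda>. projoin_over D \<Sigma> R T m \<Lambda> \<and> (\<forall>i<m. card (\<Lambda> i) = card T + 1)"
proof -
  obtain e where e: "bij_betw e {0..<card \<Sigma>} \<Sigma>" using ex_bij_betw_nat_finite[OF fin] by blast
  have e': "bij_betw e {..<card \<Sigma>} \<Sigma>" using e by (simp add: atLeast0LessThan)
  define L where "L j = T \<union> {e j}" for j
  have eS: "j < card \<Sigma> \<Longrightarrow> e j \<in> \<Sigma>" for j using e' bij_betwE by blast
  have U: "(\<Union>j<card \<Sigma>. L j) = T \<union> \<Sigma>"
  proof -
    have "(\<Union>j<card \<Sigma>. L j) = (\<Union>i\<in>e ` {..<card \<Sigma>}. T \<union> {i})" unfolding L_def by auto
    also have "\<dots> = (\<Union>i\<in>\<Sigma>. T \<union> {i})" using e' by (simp add: bij_betw_def)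
    also have "\<dots> = T \<union> \<Sigma>" using ne by auto
    finally show ?thesis .
  qed
  have S: "\<forall>j<card \<Sigma>. proj (L j) Rh \<subseteq> L j \<rightarrow>\<^sub>E D"
  proof (intro allI impI subsetI)
    fix j x assume j: "j < card \<Sigma>" and x: "x \<in> proj (L j) Rh"
    then obtain b where "b \<in> Rh" "x = restrict b (L j)" unfolding proj_def by auto
    moreover have "L j \<subseteq> T \<union> \<Sigma>" using eS[OF j] L_def by auto
    ultimately show "x \<in> L j \<rightarrow>\<^sub>E D" using Rh by (auto simp: PiE_def)
  qed
  have jr: "join D {..<card \<Sigma>} L (\<lambda>j. proj (L j) Rh) = join D \<Sigma> (\<lambda>i. T \<union> {i}) (\<lambda>i. proj (T \<union> {i}) Rh)"
    unfolding L_def by (rule join_reindex[OF e'])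
  have "R = proj \<Sigma> (join D {..<card \<Sigma>} L (\<lambda>j. proj (L j) Rh))"
    using eq jr by (simp only:)
  then have "projoin_over D \<Sigma> R T (card \<Sigma>) L"
    unfolding projoin_over_def
    apply (intro conjI)
       apply (rule T(1))
      apply (rule T(2))
     apply (rule U)
    apply (rule exI[of _ "\<lambda>j. proj (L j) Rh"])
    using S by (intro conjI)
  moreover have "\<forall>j<card \<Sigma>. card (L j) = card T + 1"
    using eS T unfolding L_def by (auto simp: card_insert_if)
  ultimately show ?thesis by blast
qed

theorem theorem21:
  fixes D :: "'d set" and \<Sigma> :: "'a set" and R :: "('a \<Rightarrow> 'd) set" and k :: nat
  assumes attrs: "infinite (UNIV :: 'a set)"
    and fin: "finite \<Sigma>" and ne: "\<Sigma> \<noteq> {}"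
    and rel: "R \<subseteq> \<Sigma> \<rightarrow>\<^sub>E D"
    and size: "R \<lesssim> ({..<k} \<rightarrow>\<^sub>E D)"
  shows "(\<exists>T Rh. finite T \<and> card T = k \<and> T \<inter> \<Sigma> = {} \<and> Rh \<subseteq> (T \<union> \<Sigma>) \<rightarrow>\<^sub>E D \<and>
            R = proj \<Sigma> (join D \<Sigma> (\<lambda>i. T \<union> {i}) (\<lambda>i. proj (T \<union> {i}) Rh)))
         \<and> (k + 2 \<le> card \<Sigma> \<longrightarrow> projoin_reducible D \<Sigma> R)
         \<and> (k = 1 \<and> 3 \<le> card \<Sigma> \<longrightarrow> projoin_reducible_to_binaries D \<Sigma> R)"
proof -
  obtain T Rh where TR: "finite T" "card T = k" "T \<inter> \<Sigma> = {}" "Rh \<subseteq> (T \<union> \<Sigma>) \<rightarrow>\<^sub>E D"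
      "R = proj \<Sigma> (join D \<Sigma> (\<lambda>i. T \<union> {i}) (\<lambda>i. proj (T \<union> {i}) Rh))"
    using part1[OF assms] by blast
  obtain m L where mL: "projoin_over D \<Sigma> R T m L" "\<forall>i<m. card (L i) = k + 1"
    using part23[OF fin ne TR(1,3,4,5)] TR(2) by blast
  have 2: "k + 2 \<le> card \<Sigma> \<longrightarrow> projoin_reducible D \<Sigma> R"
    unfolding projoin_reducible_def using mL by fastforce
  have 3: "k = 1 \<and> 3 \<le> card \<Sigma> \<longrightarrow> projoin_reducible_to_binaries D \<Sigma> R"
    unfolding projoin_reducible_to_binaries_def using mL by fastforce
  show ?thesis using TR 2 3 by blast
qed

end
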